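(* Let $n\ge2$, $A\in\mathbb{R}^{n\times n}$, $B\in\mathbb{R}^n$ with $B\neq0$, and $\mu\in\mathbb{R}$. Let $q\in\mathbb{R}^n$ be a unit vector with $(A-\mu I)q\in\operatorname{span}\{B\}$ and let $Q\in\mathbb{R}^{n\times(n-1)}$ be such that $(q\;\;Q)$ is orthogonal. Put $\bar A=Q^TAQ$, $\bar B=Q^TB$ and $$K_o=\frac{B^T}{B^TB}(A-\mu I)\,qq^T .$$ Then for every $\bar K\in\mathbb{R}^{1\times(n-1)}$ and every $\lambda$, $$\det\big(\lambda I_n-A+B(K_o+\bar KQ^T)\big)=(\lambda-\mu)\,\det\big(\lambda I_{n-1}-\bar A+\bar B\bar K\big).$$ Consequently, if $\bar K$ gives $\bar A-\bar B\bar K$ the eigenvalues $\lambda_2,\dots,\lambda_n$, then $K_o+\bar KQ^T$ gives $A-B(K_o+\bar KQ^T)$ the eigenvalues $\mu,\lambda_2,\dots,\lambda_n$. *)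

theory Defs
  imports "Jordan_Normal_Form.Char_Poly"
begin

definition colm :: "real vec \<Rightarrow> real mat" where
  "colm v = mat_of_cols (dim_vec v) [v]"

definition rowm :: "real vec \<Rightarrow> real mat" where
  "rowm v = mat_of_rows (dim_vec v) [v]"

end

theory Submission
  imports Defs
begin

lemma colm_carrier[simp]: "v \<in> carrier_vec n \<Longrightarrow> colm v \<in> carrier_mat n 1"
  unfolding colm_def by auto
lemma col_colm[simp]: "col (colm v) 0 = v"
  unfolding colm_def by (subst col_mat_of_cols) auto
lemma rowm_carrier[simp]: "v \<in> carrier_vec n \<Longrightarrow> rowm v \<in> carrier_mat 1 n"
  unfolding rowm_def by auto
lemma row_rowm[simp]: "row (rowm v) 0 = v"
  unfolding rowm_def by (subst mat_of_rows_row) auto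
lemma colm_mult_vec: assumes "v \<in> carrier_vec n" "w \<in> carrier_vec 1"
  shows "colm v *\<^sub>v w = (w $ 0) \<cdot>\<^sub>v v"
  using assms unfolding colm_def
  by (intro eq_vecI) (auto simp: scalar_prod_def mat_of_cols_def row_def)
lemma colm_index[simp]: "i < dim_vec v \<Longrightarrow> colm v $$ (i,0) = v $ i"
  unfolding colm_def by (simp add: mat_of_cols_def)
lemma colm_dims[simp]: "dim_row (colm v) = dim_vec v" "dim_col (colm v) = 1"
  unfolding colm_def by auto
lemma rowm_index[simp]: "j < dim_vec v \<Longrightarrow> rowm v $$ (0,j) = v $ j"
  unfolding rowm_def by (simp add: mat_of_rows_def)
lemma rowm_dims[simp]: "dim_row (rowm v) = 1" "dim_col (rowm v) = dim_vec v"
  unfolding rowm_def by auto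
lemma mat_colm: assumes "M \<in> carrier_mat n n" "v \<in> carrier_vec n"
  shows "M * colm v = colm (M *\<^sub>v v)"
  using assms by (intro eq_matI) auto
lemma tXMY: assumes X: "X \<in> carrier_mat n k" and M: "M \<in> carrier_mat n n" and Y: "Y \<in> carrier_mat n m"
  and i: "i < k" and j: "j < m"
  shows "(transpose_mat X * M * Y) $$ (i,j) = col X i \<bullet> (M *\<^sub>v col Y j)"
proof -
  have "transpose_mat X * M * Y = transpose_mat X * (M * Y)"
    using X M Y by (intro assoc_mult_mat) auto
  thus ?thesis using X M Y i j by (simp add: mult_mat_vec_def)
qed

theorem mainTheorem11:
  fixes n :: nat and A Q Kbar :: "real mat" and B q :: "real vec" and \<mu> :: real
    and lam :: "nat \<Rightarrow> complex"
  assumes n: "n \<ge> 2"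
    and A: "A \<in> carrier_mat n n"
    and B: "B \<in> carrier_vec n" and B0: "B \<noteq> 0\<^sub>v n"
    and q: "q \<in> carrier_vec n" and q_unit: "q \<bullet> q = 1"
    and q_span: "\<exists>c. (A - \<mu> \<cdot>\<^sub>m 1\<^sub>m n) *\<^sub>v q = c \<cdot>\<^sub>v B"
    and Q: "Q \<in> carrier_mat n (n - 1)"
    and orth: "transpose_mat (mat_of_cols n (q # cols Q)) * mat_of_cols n (q # cols Q) = 1\<^sub>m n"
    and Kbar: "Kbar \<in> carrier_mat 1 (n - 1)"
  shows
    "(let Abar = transpose_mat Q * A * Q;
          Bbar = transpose_mat Q * colm B;
          Ko = (1 / (B \<bullet> B)) \<cdot>\<^sub>m (rowm B * (A - \<mu> \<cdot>\<^sub>m 1\<^sub>m n) * colm q * rowm q);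
          K = Ko + Kbar * transpose_mat Q
      in (\<forall>s::real. det (s \<cdot>\<^sub>m 1\<^sub>m n - A + colm B * K)
                   = (s - \<mu>) * det (s \<cdot>\<^sub>m 1\<^sub>m (n - 1) - Abar + Bbar * Kbar))
       \<and> (map_poly complex_of_real (char_poly (Abar - Bbar * Kbar))
              = (\<Prod>i\<in>{2..n}. [:- lam i, 1:])
          \<longrightarrow> map_poly complex_of_real (char_poly (A - colm B * K))
              = [:- complex_of_real \<mu>, 1:] * (\<Prod>i\<in>{2..n}. [:- lam i, 1:])))"
proof -
  obtain c where c: "(A - \<mu> \<cdot>\<^sub>m 1\<^sub>m n) *\<^sub>v q = c \<cdot>\<^sub>v B" using q_span by blast
  obtain m where nm: "n = Suc m" using n by (cases n) auto
  have m1: "n - 1 = m" using nm by simp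
  have Qm: "Q \<in> carrier_mat n m" using Q m1 by simp
  have Kb: "Kbar \<in> carrier_mat 1 m" using Kbar m1 by simp
  define P where "P = mat_of_cols n (q # cols Q)"
  have P: "P \<in> carrier_mat n n" unfolding P_def using Qm nm
    by (metis length_Cons cols_length mat_of_cols_carrier(1) carrier_matD(2))
  have colQ: "col Q j \<in> carrier_vec n" for j using Qm by auto
  have setc: "set (q # cols Q) \<subseteq> carrier_vec n" using q Qm by (auto simp: cols_def)
  have P0: "col P 0 = q" unfolding P_def using setc by (subst col_mat_of_cols) auto
  have PS: "col P (Suc j) = col Q j" if "j < m" for j
    unfolding P_def using setc Qm that by (subst col_mat_of_cols) auto
  have Pij: "col P i \<bullet> col P j = (if i = j then 1 else 0)" if "i < n" "j < n" for i j
  proof -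
    have "(transpose_mat P * P) $$ (i,j) = col P i \<bullet> col P j" using P that by simp
    with orth[folded P_def] that show ?thesis by simp
  qed
  have qQ: "q \<bullet> col Q j = 0" if "j < m" for j
    using Pij[of 0 "Suc j"] that nm P0 PS[OF that] by simp
  have Qq: "col Q j \<bullet> q = 0" if "j < m" for j
    using qQ[OF that] comm_scalar_prod[OF q colQ[of j]] by simp
  have QQ: "col Q i \<bullet> col Q j = (if i = j then 1 else 0)" if "i < m" "j < m" for i j
    using Pij[of "Suc i" "Suc j"] that nm PS by simp
  have BB: "B \<bullet> B \<noteq> 0"
  proof
    assume "B \<bullet> B = 0"
    hence "(\<Sum>i\<in>{0..<n}. B$i * B$i) = 0" using B by (simp add: scalar_prod_def)
    hence "\<forall>i\<in>{0..<n}. B$i * B$i = 0" by (subst sum_nonneg_eq_0_iff[symmetric]) auto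
    hence "B = 0\<^sub>v n" using B by (intro eq_vecI) auto
    with B0 show False by simp
  qed
  define Amu where "Amu = A - \<mu> \<cdot>\<^sub>m 1\<^sub>m n"
  have Amu: "Amu \<in> carrier_mat n n" using A unfolding Amu_def by auto
  have "rowm B * Amu * colm q = rowm B * (Amu * colm q)" using B Amu q by (intro assoc_mult_mat) auto
  also have "Amu * colm q = colm (c \<cdot>\<^sub>v B)" using mat_colm[OF Amu q] c Amu_def by simp
  also have "rowm B * colm (c \<cdot>\<^sub>v B) = (c * (B \<bullet> B)) \<cdot>\<^sub>m 1\<^sub>m 1" using B by (intro eq_matI) auto
  finally have r1: "rowm B * Amu * colm q = (c * (B \<bullet> B)) \<cdot>\<^sub>m 1\<^sub>m 1" .
  have Ko: "(1 / (B \<bullet> B)) \<cdot>\<^sub>m (rowm B * (A - \<mu> \<cdot>\<^sub>m 1\<^sub>m n) * colm q * rowm q) = c \<cdot>\<^sub>m rowm q"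
    unfolding Amu_def[symmetric] r1 using BB q by (intro eq_matI) (auto simp: scalar_prod_def)
  define K where "K = c \<cdot>\<^sub>m rowm q + Kbar * transpose_mat Q"
  have Kc: "K \<in> carrier_mat 1 n" unfolding K_def using q Kb Qm by auto
  have QTq: "transpose_mat Q *\<^sub>v q = 0\<^sub>v m" using Qm q Qq by (intro eq_vecI) auto
  have QTQ: "transpose_mat Q *\<^sub>v col Q j = unit_vec m j" if "j < m" for j
    using Qm QQ that by (intro eq_vecI) auto
  have Kv: "K *\<^sub>v v = c \<cdot>\<^sub>v (rowm q *\<^sub>v v) + Kbar *\<^sub>v (transpose_mat Q *\<^sub>v v)"
    if v: "v \<in> carrier_vec n" for v
    unfolding K_def using q Kb Qm v
    by (subst add_mult_distrib_mat_vec[of _ 1 n]) (auto intro!: eq_vecI)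
  have rK: "row Kbar 0 \<in> carrier_vec m" using Kb by auto
  have Kq: "(K *\<^sub>v q) $ 0 = c" using Kv[OF q] QTq q q_unit Kb scalar_prod_right_zero[OF rK] by simp
  have KQ: "(K *\<^sub>v col Q j) $ 0 = Kbar $$ (0,j)" if "j < m" for j
    using Kv[OF colQ[of j]] QTQ[OF that] qQ[OF that] q that Kb by simp
  define M where "M s = s \<cdot>\<^sub>m 1\<^sub>m n - A + colm B * K" for s
  have Mc: "M s \<in> carrier_mat n n" for s unfolding M_def using A B Kc by auto
  have Mv: "M s *\<^sub>v v = s \<cdot>\<^sub>v v - A *\<^sub>v v + ((K *\<^sub>v v) $ 0) \<cdot>\<^sub>v B" if v: "v \<in> carrier_vec n" for s v
  proof -
    have "colm B * K *\<^sub>v v = colm B *\<^sub>v (K *\<^sub>v v)" using B Kc v by (intro assoc_mult_mat_vec) auto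
    also have "\<dots> = ((K *\<^sub>v v) $ 0) \<cdot>\<^sub>v B" using colm_mult_vec[OF B, of "K *\<^sub>v v"] Kc v by auto
    finally have 1: "colm B * K *\<^sub>v v = ((K *\<^sub>v v) $ 0) \<cdot>\<^sub>v B" .
    show ?thesis unfolding M_def
      using A B Kc v 1
      by (subst add_mult_distrib_mat_vec[of _ n n], force, force, force,
          subst minus_mult_distrib_mat_vec[of _ n n], force, force, force) (auto intro!: eq_vecI)
  qed
  have Aq: "A *\<^sub>v q = c \<cdot>\<^sub>v B + \<mu> \<cdot>\<^sub>v q"
  proof -
    have "(A - \<mu> \<cdot>\<^sub>m 1\<^sub>m n) *\<^sub>v q = A *\<^sub>v q - (\<mu> \<cdot>\<^sub>m 1\<^sub>m n) *\<^sub>v q"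
      using A q by (intro minus_mult_distrib_mat_vec) auto
    with c have "A *\<^sub>v q - (\<mu> \<cdot>\<^sub>m 1\<^sub>m n) *\<^sub>v q = c \<cdot>\<^sub>v B" by simp
    note eq = this
    show ?thesis
    proof (rule eq_vecI)
      fix i assume "i < dim_vec (c \<cdot>\<^sub>v B + \<mu> \<cdot>\<^sub>v q)"
      hence i: "i < n" using B q by simp
      have "(A *\<^sub>v q - (\<mu> \<cdot>\<^sub>m 1\<^sub>m n) *\<^sub>v q) $ i = (c \<cdot>\<^sub>v B) $ i" using eq by simp
      thus "(A *\<^sub>v q) $ i = (c \<cdot>\<^sub>v B + \<mu> \<cdot>\<^sub>v q) $ i" using A q B i by simp
    qed (use A B q in auto)
  qed
  have Mq: "M s *\<^sub>v q = (s - \<mu>) \<cdot>\<^sub>v q" for s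
    using Mv[OF q, of s] Kq Aq q B by (auto intro!: eq_vecI simp: algebra_simps)
  define Abar where "Abar = transpose_mat Q * A * Q"
  define Bbar where "Bbar = transpose_mat Q * colm B"
  define N where "N s = s \<cdot>\<^sub>m 1\<^sub>m m - Abar + Bbar * Kbar" for s
  have Abc: "Abar \<in> carrier_mat m m" unfolding Abar_def using A Qm by auto
  have Bbc: "Bbar \<in> carrier_mat m 1" unfolding Bbar_def using B Qm by auto
  have Nc: "N s \<in> carrier_mat m m" for s unfolding N_def using Abc Bbc Kb by auto
  have Nij: "N s $$ (i,j) = col Q i \<bullet> (M s *\<^sub>v col Q j)" if ij: "i < m" "j < m" for s i j
  proof -
    have "Abar $$ (i,j) = col Q i \<bullet> (A *\<^sub>v col Q j)" unfolding Abar_def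
      by (rule tXMY[OF Qm A Qm ij])
    moreover have "(Bbar * Kbar) $$ (i,j) = (col Q i \<bullet> B) * Kbar $$ (0,j)"
      using Bbc Kb ij Qm B unfolding Bbar_def by (simp add: scalar_prod_def)
    moreover have "col Q i \<bullet> (M s *\<^sub>v col Q j)
        = s * (col Q i \<bullet> col Q j) - col Q i \<bullet> (A *\<^sub>v col Q j) + Kbar $$ (0,j) * (col Q i \<bullet> B)"
      unfolding Mv[OF colQ[of j]] KQ[OF ij(2)]
      using colQ[of i] colQ[of j] A B
      by (subst scalar_prod_add_distrib[of _ n], auto simp: scalar_prod_minus_distrib[of _ n])
    ultimately show ?thesis unfolding N_def using ij Abc Bbc Kb QQ[OF ij] by simp
  qed
  define T where "T s = four_block_mat (mat 1 1 (\<lambda>_. s - \<mu>)) (mat 1 m (\<lambda>(_,j). q \<bullet> (M s *\<^sub>v col Q j))) (0\<^sub>m m 1) (N s)" for s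
  have TPMP: "transpose_mat P * M s * P = T s" for s
  proof (rule eq_matI)
    fix i j assume "i < dim_row (T s)" "j < dim_col (T s)"
    hence i: "i < n" and j: "j < n" unfolding T_def using Nc[of s] nm by auto
    have e: "(transpose_mat P * M s * P) $$ (i,j) = col P i \<bullet> (M s *\<^sub>v col P j)"
      by (rule tXMY[OF P Mc P i j])
    show "(transpose_mat P * M s * P) $$ (i,j) = T s $$ (i,j)"
      unfolding e
    proof (cases i; cases j)
      assume "i = 0" "j = 0" thus "col P i \<bullet> (M s *\<^sub>v col P j) = T s $$ (i, j)"
        unfolding T_def using P0 Mq q q_unit Nc[of s] by simp
    next
      fix j' assume "i = 0" "j = Suc j'" thus "col P i \<bullet> (M s *\<^sub>v col P j) = T s $$ (i, j)"
        unfolding T_def using P0 PS j nm Nc[of s] by simp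
    next
      fix i' assume "i = Suc i'" "j = 0" thus "col P i \<bullet> (M s *\<^sub>v col P j) = T s $$ (i, j)"
        unfolding T_def using P0 PS i nm Nc[of s] Mq q Qq[of i'] colQ[of i'] by simp
    next
      fix i' j' assume "i = Suc i'" "j = Suc j'" thus "col P i \<bullet> (M s *\<^sub>v col P j) = T s $$ (i, j)"
        unfolding T_def using PS i j nm Nc[of s] Nij by simp
    qed
  qed (use P Mc Nc[of s] nm in \<open>auto simp: T_def\<close>)
  have dP: "det (transpose_mat P) * det P = 1"
    using det_mult[of "transpose_mat P" n P] P orth[folded P_def] by simp
  have detM: "det (M s) = (s - \<mu>) * det (N s)" for s
  proof -
    have "det (transpose_mat P * M s * P) = det (transpose_mat P) * det (M s) * det P"
      using P Mc det_mult by (metis mult_carrier_mat transpose_carrier_mat)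
    also have "\<dots> = det (M s)" using dP by (simp add: algebra_simps)
    finally have "det (M s) = det (T s)" using TPMP by simp
    also have "\<dots> = det (mat 1 1 (\<lambda>_. s - \<mu>)) * det (N s)" unfolding T_def
      by (rule det_four_block_mat_lower_left_zero_col) (use Nc in auto)
    also have "det (mat 1 1 (\<lambda>_. s - \<mu>)) = s - \<mu>" by (subst det_single) auto
    finally show ?thesis .
  qed
  have cp1: "poly (char_poly (A - colm B * K)) s = det (M s)" for s
  proof -
    have "- char_matrix (A - colm B * K) s = M s"
      unfolding M_def char_matrix_def using A B Kc by (intro eq_matI) auto
    moreover have "A - colm B * K \<in> carrier_mat n n"
      by (rule minus_carrier_mat, rule mult_carrier_mat[OF colm_carrier[OF B] Kc])
    ultimately show ?thesis using char_poly_matrix[of "A - colm B * K" n s] by auto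
  qed
  have cp2: "poly (char_poly (Abar - Bbar * Kbar)) s = det (N s)" for s
  proof -
    have "- char_matrix (Abar - Bbar * Kbar) s = N s"
      unfolding N_def char_matrix_def using Abc Bbc Kb by (intro eq_matI) auto
    moreover have "Abar - Bbar * Kbar \<in> carrier_mat m m"
      by (rule minus_carrier_mat, rule mult_carrier_mat[OF Bbc Kb])
    ultimately show ?thesis using char_poly_matrix[of "Abar - Bbar * Kbar" m s] by auto
  qed
  have cpe: "char_poly (A - colm B * K) = [:- \<mu>, 1:] * char_poly (Abar - Bbar * Kbar)"
    by (rule poly_eq_poly_eq_iff[THEN iffD1], rule ext) (simp add: cp1 cp2 detM algebra_simps)
  show ?thesis
    unfolding Let_def Ko m1 K_def[symmetric] Abar_def[symmetric] Bbar_def[symmetric]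
  proof (intro conjI allI impI)
    fix s show "det (s \<cdot>\<^sub>m 1\<^sub>m n - A + colm B * K) = (s - \<mu>) * det (s \<cdot>\<^sub>m 1\<^sub>m m - Abar + Bbar * Kbar)"
      using detM[of s] unfolding M_def N_def .
  next
    assume h: "map_poly complex_of_real (char_poly (Abar - Bbar * Kbar)) = (\<Prod>i = 2..n. [:- lam i, 1:])"
    show "map_poly complex_of_real (char_poly (A - colm B * K)) = [:- complex_of_real \<mu>, 1:] * (\<Prod>i = 2..n. [:- lam i, 1:])"
    proof -
      interpret mp: map_poly_comm_ring_hom complex_of_real ..
      show ?thesis unfolding cpe h[symmetric] mp.hom_mult by simp
    qed
  qed
qed

end
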